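(* Let $X_n$ be the maximum weight of a directed path from $1$ to $n$ in the transitive tournament on $\{1,\ldots,n\}$ with independent $\mathrm{Bernoulli}(1/2)$ edge weights. Then \[ \lim_{n\to\infty}\frac{\mathbb{E}[X_n]}{n-1}=\Big(\sum_{n\ge1}2^{-\binom{n}{2}}\Big)^{-1}=0.60914971106\ldots \]
   Context: The transitive tournament on $\{1,\ldots,n\}$ has a directed edge $(i,j)$ for every $1\le i<j\le n$. Each edge independently has weight $1$ with probability $1/2$ and weight $0$ otherwise. The weight of a path is the sum of its edge weights. *)

theory Defs
  imports Complex_Main
begin

definition tt_edges :: "nat \<Rightarrow> (nat \<times> nat) set" where
  "tt_edges n = {(i, j). 1 \<le> i \<and> i < j \<and> j \<le> n}"

definition tt_paths :: "nat \<Rightarrow> nat list set" where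
  "tt_paths n = {xs. xs \<noteq> [] \<and> hd xs = 1 \<and> last xs = n \<and> sorted_wrt (<) xs}"

definition path_weight :: "(nat \<times> nat) set \<Rightarrow> nat list \<Rightarrow> nat" where
  "path_weight S xs = sum_list (map (\<lambda>e. if e \<in> S then 1 else 0) (zip xs (tl xs)))"

text \<open>Maximum weight of a directed path from 1 to n (the random variable X_n, as a function
  of the set S of weight-1 edges).\<close>
definition max_path_weight :: "nat \<Rightarrow> (nat \<times> nat) set \<Rightarrow> nat" where
  "max_path_weight n S = Max (path_weight S ` tt_paths n)"

text \<open>Expectation of X_n: with independent Bernoulli(1/2) weights, the set of weight-1 edges
  is uniformly distributed over all subsets of the edge set.\<close>
definition expected_max_weight :: "nat \<Rightarrow> real" where
  "expected_max_weight n =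
     (\<Sum>S\<in>Pow (tt_edges n). real (max_path_weight n S)) / 2 ^ card (tt_edges n)"

end

theory Submission
  imports Defs
begin

primrec st :: "(nat \<times> nat) set \<Rightarrow> nat \<Rightarrow> nat \<times> nat" where
  "st S 0 = (0, 1)"
| "st S (Suc n) = (case st S n of (x, r) \<Rightarrow>
      if (\<exists>i. r \<le> i \<and> i \<le> n \<and> (i, Suc n) \<in> S) then (x + 1, Suc n) else (x, r))"

lemma zip_tl_snoc:
  "ys \<noteq> [] \<Longrightarrow> zip (ys @ [m]) (tl (ys @ [m])) = zip ys (tl ys) @ [(last ys, m)]"
  by (induction ys rule: induct_list012) auto

lemma pw_snoc:
  "ys \<noteq> [] \<Longrightarrow> path_weight S (ys @ [m]) = path_weight S ys + (if (last ys, m) \<in> S then 1 else 0)"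
  unfolding path_weight_def zip_tl_snoc by simp

lemma hd_le_last: "sorted_wrt (<) (ys::nat list) \<Longrightarrow> ys \<noteq> [] \<Longrightarrow> hd ys \<le> last ys"
  by (cases ys) (auto simp: less_imp_le)

lemma le_last: "sorted_wrt (<) (ys::nat list) \<Longrightarrow> x \<in> set ys \<Longrightarrow> x \<le> last ys"
  by (induction ys) (auto simp: less_imp_le)

lemma path_ext:
  assumes "ys \<in> tt_paths i" "i < m"
  shows "ys @ [m] \<in> tt_paths m"
  using assms le_last[of ys] unfolding tt_paths_def by (fastforce simp: sorted_wrt_append)

lemma path_dec:
  assumes "xs \<in> tt_paths (Suc n)" "n \<ge> 1"
  obtains ys where "xs = ys @ [Suc n]" "ys \<noteq> []" "ys \<in> tt_paths (last ys)"
    "1 \<le> last ys" "last ys \<le> n"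
proof -
  have ne: "xs \<noteq> []" and h: "hd xs = 1" and l: "last xs = Suc n" and s: "sorted_wrt (<) xs"
    using assms(1) unfolding tt_paths_def by auto
  define ys where "ys = butlast xs"
  have xs: "xs = ys @ [Suc n]" using ne l ys_def by (metis append_butlast_last_id)
  have yne: "ys \<noteq> []" using xs h assms(2) by (cases ys) auto
  have hy: "hd ys = 1" using xs yne h by simp
  have sy: "sorted_wrt (<) ys" and lt: "\<forall>y\<in>set ys. y < Suc n" using s xs by (auto simp: sorted_wrt_append)
  have "last ys < Suc n" using lt yne by simp
  moreover have "1 \<le> last ys" using hd_le_last[OF sy yne] hy by simp
  ultimately show ?thesis using that xs yne hy sy unfolding tt_paths_def by auto
qed

lemma tt_paths_1: "xs \<in> tt_paths 1 \<Longrightarrow> path_weight S xs = 0"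
proof -
  assume a: "xs \<in> tt_paths 1"
  then obtain y ys where xs: "xs = y # ys" unfolding tt_paths_def by (cases xs) auto
  have "ys = []"
  proof (rule ccontr)
    assume "ys \<noteq> []"
    then have "last ys \<in> set ys" by simp
    moreover have "\<forall>z\<in>set ys. 1 < z" "last ys = 1" using a xs \<open>ys \<noteq> []\<close> unfolding tt_paths_def by auto
    ultimately show False by fastforce
  qed
  then show ?thesis using xs unfolding path_weight_def by simp
qed

lemma one_path: "[1] \<in> tt_paths 1" unfolding tt_paths_def by simp

definition pinv where
  "pinv S n x r \<longleftrightarrow> 1 \<le> r \<and> r \<le> n \<and>
     (\<forall>j\<in>{1..n}. \<forall>xs\<in>tt_paths j. path_weight S xs + (if j < r then 1 else 0) \<le> x) \<and>
     (\<forall>j\<in>{r..n}. \<exists>xs\<in>tt_paths j. path_weight S xs = x)"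

lemma pinv_st: "n \<ge> 1 \<Longrightarrow> pinv S n (fst (st S n)) (snd (st S n))"
proof (induction n rule: dec_induct)
  case base
  show ?case unfolding pinv_def using tt_paths_1[of _ S] one_path by (auto simp: path_weight_def)
next
  case (step n)
  obtain x r where xr: "st S n = (x, r)" by (cases "st S n")
  have I: "pinv S n x r" using step.IH xr by simp
  have r1: "1 \<le> r" and rn: "r \<le> n"
    and A: "\<And>j xs. j\<in>{1..n} \<Longrightarrow> xs\<in>tt_paths j \<Longrightarrow> path_weight S xs + (if j < r then 1 else 0) \<le> x"
    and B: "\<And>j. j\<in>{r..n} \<Longrightarrow> \<exists>xs\<in>tt_paths j. path_weight S xs = x"
    using I unfolding pinv_def by blast+
  show ?case
  proof (cases "\<exists>i. r \<le> i \<and> i \<le> n \<and> (i, Suc n) \<in> S")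
    case True
    then obtain i where i: "r \<le> i" "i \<le> n" "(i, Suc n) \<in> S" by blast
    have st1: "st S (Suc n) = (x + 1, Suc n)" using True xr by simp
    have A1: "path_weight S xs + (if j < Suc n then 1 else 0) \<le> x + 1"
      if j: "j\<in>{1..Suc n}" and xs: "xs\<in>tt_paths j" for j xs
    proof (cases "j \<le> n")
      case True
      then show ?thesis using A[of j xs] j xs by auto
    next
      case False
      then have jn: "j = Suc n" using j by auto
      obtain ys where ys: "xs = ys @ [Suc n]" "ys \<noteq> []" "ys \<in> tt_paths (last ys)"
        "1 \<le> last ys" "last ys \<le> n" using path_dec[of xs n] xs jn step.hyps by auto
      have "path_weight S ys \<le> x" using A[of "last ys" ys] ys by auto
      then show ?thesis using ys jn by (simp add: pw_snoc)
    qed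
    obtain ys where ys: "ys \<in> tt_paths i" "path_weight S ys = x" using B[of i] i by auto
    have ysne: "ys \<noteq> []" "last ys = i" using ys unfolding tt_paths_def by auto
    have "ys @ [Suc n] \<in> tt_paths (Suc n)" using path_ext[OF ys(1)] i by simp
    moreover have "path_weight S (ys @ [Suc n]) = x + 1" using pw_snoc[OF ysne(1)] ys ysne i by simp
    ultimately show ?thesis using st1 A1 unfolding pinv_def by auto
  next
    case False
    have st1: "st S (Suc n) = (x, r)" using False xr by simp
    have A1: "path_weight S xs + (if j < r then 1 else 0) \<le> x"
      if j: "j\<in>{1..Suc n}" and xs: "xs\<in>tt_paths j" for j xs
    proof (cases "j \<le> n")
      case True
      then show ?thesis using A[of j xs] j xs by auto
    next
      case c: False
      then have jn: "j = Suc n" using j by auto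
      obtain ys where ys: "xs = ys @ [Suc n]" "ys \<noteq> []" "ys \<in> tt_paths (last ys)"
        "1 \<le> last ys" "last ys \<le> n" using path_dec[of xs n] xs jn step.hyps by auto
      have "path_weight S ys + (if last ys < r then 1 else 0) \<le> x" using A[of "last ys" ys] ys by auto
      then show ?thesis using ys jn False rn by (auto simp add: pw_snoc split: if_splits)
    qed
    have B1: "\<exists>xs\<in>tt_paths j. path_weight S xs = x" if j: "j\<in>{r..Suc n}" for j
    proof (cases "j \<le> n")
      case True
      then show ?thesis using B j by auto
    next
      case c: False
      then have jn: "j = Suc n" using j by auto
      obtain ys where ys: "ys \<in> tt_paths n" "path_weight S ys = x" using B[of n] rn by auto
      have ysne: "ys \<noteq> []" "last ys = n" using ys unfolding tt_paths_def by auto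
      have "ys @ [Suc n] \<in> tt_paths (Suc n)" using path_ext[OF ys(1)] by simp
      moreover have "path_weight S (ys @ [Suc n]) = x" using pw_snoc[OF ysne(1)] ys ysne False rn by auto
      ultimately show ?thesis using jn by blast
    qed
    show ?thesis using st1 A1 B1 r1 rn unfolding pinv_def by auto
  qed
qed

lemma mpw_st: "n \<ge> 1 \<Longrightarrow> max_path_weight n S = fst (st S n)"
proof -
  assume n: "n \<ge> 1"
  obtain x r where xr: "st S n = (x, r)" by (cases "st S n")
  have I: "pinv S n x r" using pinv_st[OF n, of S] xr by simp
  have le: "\<forall>w\<in>path_weight S ` tt_paths n. w \<le> x" using I n unfolding pinv_def by fastforce
  have "x \<in> path_weight S ` tt_paths n" using I n unfolding pinv_def by fastforce
  moreover have "finite (path_weight S ` tt_paths n)"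
    using le by (meson finite_atMost finite_subset atMost_iff subsetI)
  ultimately have "Max (path_weight S ` tt_paths n) = x" using le by (intro Max_eqI) auto
  then show ?thesis using xr unfolding max_path_weight_def by simp
qed

lemma st_range: "n \<ge> 1 \<Longrightarrow> 1 \<le> snd (st S n) \<and> snd (st S n) \<le> n"
  using pinv_st unfolding pinv_def by blast


definition NE :: "nat \<Rightarrow> (nat \<times> nat) set" where
  "NE n = (\<lambda>i. (i, Suc n)) ` {1..n}"

definition BE :: "nat \<Rightarrow> nat \<Rightarrow> (nat \<times> nat) set" where
  "BE n r = (\<lambda>i. (i, Suc n)) ` {r..n}"

lemma fin_E: "finite (tt_edges n)"
proof -
  have "tt_edges n \<subseteq> {1..n} \<times> {1..n}" unfolding tt_edges_def by auto
  then show ?thesis by (rule finite_subset) auto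
qed

lemma fin_NE: "finite (NE n)" unfolding NE_def by simp

lemma E_Suc: "tt_edges (Suc n) = tt_edges n \<union> NE n"
  unfolding tt_edges_def NE_def by (auto simp: le_Suc_eq)

lemma E_NE_disj: "tt_edges n \<inter> NE n = {}"
  unfolding tt_edges_def NE_def by auto

lemma card_NE: "card (NE n) = n"
  unfolding NE_def by (subst card_image) (auto simp: inj_on_def)

lemma card_E_Suc: "card (tt_edges (Suc n)) = card (tt_edges n) + n"
  using E_Suc E_NE_disj card_Un_disjoint[OF fin_E fin_NE, of n] card_NE by simp

lemma sum_Pow_Un:
  assumes "finite A" "finite B" "A \<inter> B = {}"
  shows "(\<Sum>S\<in>Pow (A \<union> B). f S) = (\<Sum>X\<in>Pow A. \<Sum>Y\<in>Pow B. f (X \<union> Y))"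
proof -
  have "(\<Sum>X\<in>Pow A. \<Sum>Y\<in>Pow B. f (X \<union> Y)) = (\<Sum>(X,Y)\<in>Pow A \<times> Pow B. f (X \<union> Y))"
    by (rule sum.cartesian_product)
  also have "\<dots> = (\<Sum>S\<in>Pow (A \<union> B). f S)"
    by (rule sum.reindex_bij_witness[of _ "\<lambda>S. (S \<inter> A, S \<inter> B)" "\<lambda>(X,Y). X \<union> Y"])
       (use assms in auto)
  finally show ?thesis by simp
qed

lemma st_local: "(\<And>i j. j \<le> n \<Longrightarrow> ((i,j)\<in>S \<longleftrightarrow> (i,j)\<in>S')) \<Longrightarrow> st S n = st S' n"
proof (induction n)
  case 0
  then show ?case by simp
next
  case (Suc n)
  then have "st S n = st S' n" by simp
  then show ?case using Suc.prems by (simp split: prod.splits)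
qed

lemma st_Un_eq:
  assumes "S \<subseteq> tt_edges n" "A \<subseteq> NE n"
  shows "st (S \<union> A) n = st S n"
  by (rule st_local) (use assms in \<open>auto simp: NE_def\<close>)

lemma st_Un_Suc:
  assumes "S \<subseteq> tt_edges n" "A \<subseteq> NE n" "st S n = (x, r)"
  shows "st (S \<union> A) (Suc n) = (if A \<inter> BE n r \<noteq> {} then (x + 1, Suc n) else (x, r))"
proof -
  have "(\<exists>i. r \<le> i \<and> i \<le> n \<and> (i, Suc n) \<in> S \<union> A) \<longleftrightarrow> A \<inter> BE n r \<noteq> {}"
    using assms(1) unfolding BE_def tt_edges_def by auto
  then show ?thesis using st_Un_eq[OF assms(1,2)] assms(3) by simp
qed

lemma card_disj:
  assumes "finite N" "B \<subseteq> N"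
  shows "card {A\<in>Pow N. A \<inter> B = {}} = 2 ^ card (N - B)"
proof -
  have "{A\<in>Pow N. A \<inter> B = {}} = Pow (N - B)" by auto
  then show ?thesis using assms by (simp add: card_Pow)
qed

lemma card_NE_BE: "1 \<le> r \<Longrightarrow> r \<le> n \<Longrightarrow> card (NE n - BE n r) = r - 1"
proof -
  assume r: "1 \<le> r" "r \<le> n"
  have "NE n - BE n r = (\<lambda>i. (i, Suc n)) ` ({1..n} - {r..n})" unfolding NE_def BE_def
    by (rule image_set_diff[symmetric]) (auto simp: inj_def)
  also have "{1..n} - {r..n} = {1..<r}" using r by auto
  finally have "NE n - BE n r = (\<lambda>i. (i, Suc n)) ` {1..<r}" .
  then show ?thesis by (simp add: card_image inj_on_def)
qed

lemma BE_sub: "BE n r \<subseteq> NE n" if "1 \<le> r" unfolding BE_def NE_def using that by auto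

lemma inner_sum:
  assumes "1 \<le> r" "r \<le> n"
  shows "(\<Sum>A\<in>Pow (NE n). (if A \<inter> BE n r \<noteq> {} then c1 else c0 :: real))
         = (2^n - 2^(r-1)) * c1 + 2^(r-1) * c0"
proof -
  let ?P1 = "{A\<in>Pow (NE n). A \<inter> BE n r \<noteq> {}}" and ?P0 = "{A\<in>Pow (NE n). A \<inter> BE n r = {}}"
  have c0: "card ?P0 = 2^(r-1)" using card_disj[OF fin_NE BE_sub[OF assms(1)]] card_NE_BE[OF assms] by simp
  have "card ?P1 + card ?P0 = card (Pow (NE n))"
    by (subst card_Un_disjoint[symmetric]) (auto intro: arg_cong[where f=card] simp: fin_NE)
  then have cs: "card ?P1 + card ?P0 = 2^n" by (simp add: card_Pow fin_NE card_NE)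
  have s1: "Pow (NE n) \<inter> {A. A \<inter> BE n r \<noteq> {}} = ?P1" by auto
  have s0: "Pow (NE n) \<inter> - {A. A \<inter> BE n r \<noteq> {}} = ?P0" by auto
  have "(\<Sum>A\<in>Pow (NE n). (if A \<inter> BE n r \<noteq> {} then c1 else c0 :: real))
       = (\<Sum>A\<in>Pow (NE n) \<inter> {A. A \<inter> BE n r \<noteq> {}}. c1) + (\<Sum>A\<in>Pow (NE n) \<inter> - {A. A \<inter> BE n r \<noteq> {}}. c0)"
    by (rule sum.If_cases) (simp add: fin_NE)
  also have "\<dots> = (\<Sum>A\<in>?P1. c1) + (\<Sum>A\<in>?P0. c0)" unfolding s1 s0 ..
  also have "\<dots> = real (card ?P1) * c1 + real (card ?P0) * c0" by simp
  also have "real (card ?P1) = 2^n - 2^(r-1)"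
    using arg_cong[OF cs, of real] c0 by simp
  finally show ?thesis using c0 by simp
qed

definition avg :: "nat \<Rightarrow> ((nat \<times> nat) set \<Rightarrow> real) \<Rightarrow> real" where
  "avg n f = (\<Sum>S\<in>Pow (tt_edges n). f S) / 2 ^ card (tt_edges n)"

lemma avg_step:
  assumes n: "1 \<le> n"
  shows "avg (Suc n) (\<lambda>S. g (st S (Suc n))) =
    avg n (\<lambda>S. (1 - 2^(snd (st S n) - 1) / 2^n) * g (fst (st S n) + 1, Suc n)
              + 2^(snd (st S n) - 1) / 2^n * g (st S n))"
proof -
  have "(\<Sum>S\<in>Pow (tt_edges (Suc n)). g (st S (Suc n)))
      = (\<Sum>S\<in>Pow (tt_edges n). \<Sum>A\<in>Pow (NE n). g (st (S \<union> A) (Suc n)))"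
    unfolding E_Suc by (rule sum_Pow_Un[OF fin_E fin_NE E_NE_disj])
  also have "\<dots> = (\<Sum>S\<in>Pow (tt_edges n). ((1 - 2^(snd (st S n) - 1) / 2^n) * g (fst (st S n) + 1, Suc n)
              + 2^(snd (st S n) - 1) / 2^n * g (st S n)) * 2^n)"
  proof (rule sum.cong[OF refl])
    fix S assume S: "S \<in> Pow (tt_edges n)"
    obtain x r where xr: "st S n = (x, r)" by (cases "st S n")
    have r: "1 \<le> r" "r \<le> n" using st_range[OF n, of S] xr by auto
    have "(\<Sum>A\<in>Pow (NE n). g (st (S \<union> A) (Suc n)))
        = (\<Sum>A\<in>Pow (NE n). (if A \<inter> BE n r \<noteq> {} then g (x + 1, Suc n) else g (x, r)))"
      by (rule sum.cong[OF refl]) (use S xr st_Un_Suc in auto)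
    also have "\<dots> = (2^n - 2^(r-1)) * g (x + 1, Suc n) + 2^(r-1) * g (x, r)"
      by (rule inner_sum[OF r])
    also have "\<dots> = ((1 - 2^(r - 1) / 2^n) * g (x + 1, Suc n) + 2^(r - 1) / 2^n * g (x, r)) * 2^n"
      by (simp add: field_simps)
    finally show "(\<Sum>A\<in>Pow (NE n). g (st (S \<union> A) (Suc n))) =
      ((1 - 2^(snd (st S n) - 1) / 2^n) * g (fst (st S n) + 1, Suc n)
              + 2^(snd (st S n) - 1) / 2^n * g (st S n)) * 2^n" using xr by simp
  qed
  finally have eq: "(\<Sum>S\<in>Pow (tt_edges (Suc n)). g (st S (Suc n))) = (\<Sum>S\<in>Pow (tt_edges n). ((1 - 2^(snd (st S n) - 1) / 2^n) * g (fst (st S n) + 1, Suc n)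
              + 2^(snd (st S n) - 1) / 2^n * g (st S n)) * 2^n)" .
  show ?thesis unfolding avg_def card_E_Suc power_add eq sum_distrib_right[symmetric]
    by (simp del: st.simps)
qed


lemma avg_add: "avg n (\<lambda>S. f S + g S) = avg n f + avg n g"
  unfolding avg_def by (simp add: sum.distrib add_divide_distrib)

lemma avg_cmult: "avg n (\<lambda>S. c * f S) = c * avg n f"
  unfolding avg_def by (simp add: sum_distrib_left)

lemma avg_const: "avg n (\<lambda>S. c) = c"
  unfolding avg_def by (simp add: card_Pow fin_E)

lemma avg_nonneg: "(\<And>S. 0 \<le> f S) \<Longrightarrow> 0 \<le> avg n f"
  unfolding avg_def by (intro divide_nonneg_pos sum_nonneg) auto

lemma avg_sum: "(\<Sum>k\<in>K. avg n (f k)) = avg n (\<lambda>S. \<Sum>k\<in>K. f k S)"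
  unfolding avg_def by (simp add: sum_divide_distrib[symmetric] sum.swap[of _ K])

definition pr :: "nat \<Rightarrow> nat \<Rightarrow> real" where
  "pr n \<rho> = avg n (\<lambda>S. if snd (st S n) = \<rho> then 1 else 0)"

definition ex :: "nat \<Rightarrow> real" where
  "ex n = avg n (\<lambda>S. real (fst (st S n)))"

definition u :: "nat \<Rightarrow> real" where "u k = pr k k"

definition q :: "nat \<Rightarrow> real" where "q t = 1 / 2 ^ (Suc t choose 2)"

lemma E1: "tt_edges 1 = {}" unfolding tt_edges_def by auto

lemma pr_1: "pr 1 1 = 1" unfolding pr_def avg_def E1 by simp
lemma ex_1: "ex 1 = 0" unfolding ex_def avg_def E1 by simp

lemma pr_Suc_le:
  assumes n: "1 \<le> n" and r: "\<rho> \<le> n"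
  shows "pr (Suc n) \<rho> = 2^(\<rho>-1) / 2^n * pr n \<rho>"
proof -
  have "pr (Suc n) \<rho> = avg n (\<lambda>S. (1 - 2^(snd (st S n) - 1) / 2^n) * (if snd (fst (st S n) + 1, Suc n) = \<rho> then 1 else 0)
              + 2^(snd (st S n) - 1) / 2^n * (if snd (st S n) = \<rho> then 1 else 0))"
    unfolding pr_def by (rule avg_step[OF n, of "\<lambda>p. if snd p = \<rho> then 1 else 0"])
  also have "\<dots> = avg n (\<lambda>S. 2^(\<rho>-1) / 2^n * (if snd (st S n) = \<rho> then 1 else 0))"
    using r by (intro arg_cong[where f="avg n"] ext) (simp del: st.simps)
  finally show ?thesis unfolding avg_cmult pr_def .
qed

lemma pr_Suc_Suc:
  assumes n: "1 \<le> n"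
  shows "pr (Suc n) (Suc n) = avg n (\<lambda>S. 1 - 2^(snd (st S n) - 1) / 2^n)"
proof -
  have "pr (Suc n) (Suc n) = avg n (\<lambda>S. (1 - 2^(snd (st S n) - 1) / 2^n) * (if snd (fst (st S n) + 1, Suc n) = Suc n then 1 else 0)
              + 2^(snd (st S n) - 1) / 2^n * (if snd (st S n) = Suc n then 1 else 0))"
    unfolding pr_def by (rule avg_step[OF n, of "\<lambda>p. if snd p = Suc n then 1 else 0"])
  also have "\<dots> = avg n (\<lambda>S. 1 - 2^(snd (st S n) - 1) / 2^n)"
  proof (intro arg_cong[where f="avg n"] ext)
    fix S
    have "snd (st S n) \<noteq> Suc n" using st_range[OF n, of S] by simp
    then show "(1 - 2^(snd (st S n) - 1) / 2^n) * (if snd (fst (st S n) + 1, Suc n) = Suc n then 1 else 0)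
              + 2^(snd (st S n) - 1) / 2^n * (if snd (st S n) = Suc n then 1 else 0) = 1 - (2::real)^(snd (st S n) - 1) / 2^n"
      by (simp del: st.simps)
  qed
  finally show ?thesis .
qed

lemma ex_Suc:
  assumes n: "1 \<le> n"
  shows "ex (Suc n) = ex n + pr (Suc n) (Suc n)"
proof -
  have "ex (Suc n) = avg n (\<lambda>S. (1 - 2^(snd (st S n) - 1) / 2^n) * real (fst (fst (st S n) + 1, Suc n))
              + 2^(snd (st S n) - 1) / 2^n * real (fst (st S n)))"
    unfolding ex_def by (rule avg_step[OF n, of "\<lambda>p. real (fst p)"])
  also have "\<dots> = avg n (\<lambda>S. real (fst (st S n)) + (1 - 2^(snd (st S n) - 1) / 2^n))"
    by (intro arg_cong[where f="avg n"] ext) (simp del: st.simps add: algebra_simps add_divide_distrib)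
  finally show ?thesis unfolding avg_add pr_Suc_Suc[OF n] ex_def .
qed

lemma pr_sum: assumes n: "1 \<le> n" shows "(\<Sum>\<rho>\<in>{1..n}. pr n \<rho>) = 1"
proof -
  have "(\<Sum>\<rho>\<in>{1..n}. pr n \<rho>) = avg n (\<lambda>S. \<Sum>\<rho>\<in>{1..n}. if snd (st S n) = \<rho> then 1 else 0)"
    unfolding pr_def avg_sum ..
  also have "\<dots> = avg n (\<lambda>S. 1)"
    using st_range[OF n] by (intro arg_cong[where f="avg n"] ext) simp
  finally show ?thesis by (simp add: avg_const)
qed

lemma q_0: "q 0 = 1" unfolding q_def by (simp add: binomial_eq_0)

lemma q_Suc: "q (Suc t) = q t / 2 ^ Suc t"
proof -
  have "Suc (Suc t) choose 2 = (Suc t choose 2) + Suc t"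
    using binomial_Suc_Suc[of "Suc t" 1] by (simp add: numeral_2_eq_2)
  then show ?thesis unfolding q_def by (simp add: power_add)
qed

lemma pr_u: assumes "1 \<le> \<rho>" "\<rho> \<le> n" shows "pr n \<rho> = u \<rho> * q (n - \<rho>)"
  using assms(2)
proof (induction n rule: dec_induct)
  case base
  then show ?case by (simp add: u_def q_0)
next
  case (step n)
  have "pr (Suc n) \<rho> = 2^(\<rho>-1) / 2^n * (u \<rho> * q (n - \<rho>))"
    using pr_Suc_le[of n \<rho>] step assms by simp
  moreover have "q (Suc n - \<rho>) = q (n - \<rho>) * (2^(\<rho>-1) / 2^n)"
  proof -
    have e: "Suc n - \<rho> = Suc (n - \<rho>)" using step assms by simp
    have "(2::real)^n = 2^(\<rho>-1) * 2^(Suc (n - \<rho>))"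
      unfolding power_add[symmetric] using step assms by simp
    then show ?thesis unfolding e q_Suc by (simp add: field_simps)
  qed
  ultimately show ?case by simp
qed

lemma renewal: "1 \<le> n \<Longrightarrow> (\<Sum>\<rho>\<in>{1..n}. u \<rho> * q (n - \<rho>)) = 1"
  using pr_sum[of n] pr_u[of _ n] by simp

lemma u_nonneg: "0 \<le> u k"
  unfolding u_def pr_def by (rule avg_nonneg) simp

lemma u_1: "u 1 = 1" unfolding u_def using pr_1 by simp

lemma ex_u: "1 \<le> n \<Longrightarrow> ex n = (\<Sum>k\<in>{1..n}. u k) - 1"
proof (induction n rule: dec_induct)
  case base
  then show ?case using ex_1 u_1 by (simp add: One_nat_def)
next
  case (step n)
  then show ?case using ex_Suc[of n] by (simp add: u_def)
qed

lemma emw_ex: "1 \<le> n \<Longrightarrow> expected_max_weight n = ex n"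
  unfolding expected_max_weight_def ex_def avg_def using mpw_st by simp


lemma q_nonneg: "0 \<le> q t" unfolding q_def by simp

lemma q_le: "q t \<le> (1/2) ^ t"
proof (induction t)
  case 0 then show ?case by (simp add: q_0)
next
  case (Suc t)
  have "q (Suc t) = q t / 2 ^ Suc t" by (rule q_Suc)
  also have "\<dots> \<le> q t / 2" using q_nonneg[of t]
    by (intro divide_left_mono) (auto simp: self_le_power)
  also have "\<dots> \<le> (1/2) ^ Suc t" using Suc by (simp add: field_simps)
  finally show ?case .
qed

lemma q_summable: "summable q"
  by (rule summable_comparison_test[where g="\<lambda>t. (1/2::real) ^ t"])
     (use q_le q_nonneg in auto)

definition Qs :: "nat \<Rightarrow> real" where "Qs s = (\<Sum>t\<le>s. q t)"

definition U :: "nat \<Rightarrow> real" where "U n = (\<Sum>k\<in>{1..n}. u k)"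

lemma Qs_Suc: "Qs (Suc s) = Qs s + q (Suc s)" unfolding Qs_def by simp

lemma Qs_0: "Qs 0 = 1" unfolding Qs_def by (simp add: q_0)

lemma Qs_mono: "a \<le> b \<Longrightarrow> Qs a \<le> Qs b"
  unfolding Qs_def by (rule sum_mono2) (auto simp: q_nonneg)

lemma Qs_ge1: "1 \<le> Qs s" using Qs_mono[of 0 s] Qs_0 by simp

lemma Qs_le: "Qs s \<le> suminf q"
  unfolding Qs_def by (rule sum_le_suminf[OF q_summable]) (auto simp: q_nonneg)

lemma Qs_lim: "Qs \<longlonglongrightarrow> suminf q"
  unfolding Qs_def[abs_def] by (rule summable_LIMSEQ'[OF q_summable])

lemma star: "(\<Sum>\<rho>\<in>{1..M}. u \<rho> * Qs (M - \<rho>)) = real M"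
proof (induction M)
  case 0 then show ?case by simp
next
  case (Suc M)
  have "(\<Sum>\<rho>\<in>{1..Suc M}. u \<rho> * Qs (Suc M - \<rho>)) = (\<Sum>\<rho>\<in>{1..M}. u \<rho> * Qs (Suc M - \<rho>)) + u (Suc M) * Qs 0"
    by simp
  also have "(\<Sum>\<rho>\<in>{1..M}. u \<rho> * Qs (Suc M - \<rho>)) = (\<Sum>\<rho>\<in>{1..M}. u \<rho> * Qs (M - \<rho>) + u \<rho> * q (Suc M - \<rho>))"
  proof (rule sum.cong[OF refl])
    fix \<rho> assume "\<rho> \<in> {1..M}"
    then have "Suc M - \<rho> = Suc (M - \<rho>)" by auto
    then show "u \<rho> * Qs (Suc M - \<rho>) = u \<rho> * Qs (M - \<rho>) + u \<rho> * q (Suc M - \<rho>)"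
      by (simp add: Qs_Suc algebra_simps)
  qed
  also have "\<dots> = real M + (\<Sum>\<rho>\<in>{1..M}. u \<rho> * q (Suc M - \<rho>))"
    using Suc.IH by (simp add: sum.distrib)
  finally have "(\<Sum>\<rho>\<in>{1..Suc M}. u \<rho> * Qs (Suc M - \<rho>)) = real M + (\<Sum>\<rho>\<in>{1..Suc M}. u \<rho> * q (Suc M - \<rho>))"
    by (simp add: Qs_0 q_0)
  also have "\<dots> = real M + 1" using renewal[of "Suc M"] by simp
  finally show ?case by simp
qed

lemma U_lower: "real n \<le> U n * suminf q"
proof -
  have "real n = (\<Sum>\<rho>\<in>{1..n}. u \<rho> * Qs (n - \<rho>))" by (rule star[symmetric])
  also have "\<dots> \<le> (\<Sum>\<rho>\<in>{1..n}. u \<rho> * suminf q)"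
    by (intro sum_mono mult_left_mono Qs_le u_nonneg)
  also have "\<dots> = U n * suminf q" unfolding U_def by (simp add: sum_distrib_right)
  finally show ?thesis .
qed

lemma U_upper: "Qs K * U n \<le> real (n + K)"
proof -
  have "Qs K * U n = (\<Sum>\<rho>\<in>{1..n}. u \<rho> * Qs K)" unfolding U_def by (simp add: sum_distrib_left mult.commute)
  also have "\<dots> \<le> (\<Sum>\<rho>\<in>{1..n}. u \<rho> * Qs (n + K - \<rho>))"
    by (intro sum_mono mult_left_mono Qs_mono u_nonneg) auto
  also have "\<dots> \<le> (\<Sum>\<rho>\<in>{1..n+K}. u \<rho> * Qs (n + K - \<rho>))"
    by (intro sum_mono2) (auto intro!: mult_nonneg_nonneg u_nonneg order_trans[OF zero_le_one Qs_ge1])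
  also have "\<dots> = real (n + K)" by (rule star)
  finally show ?thesis .
qed


theorem corollary6:
  shows "(\<lambda>n. expected_max_weight n / (real n - 1)) \<longlonglongrightarrow>
           1 / (\<Sum>k. 1 / 2 ^ (Suc k choose 2))"
proof -
  define \<mu> where "\<mu> = suminf q"
  have mu_eq: "(\<Sum>k. 1 / 2 ^ (Suc k choose 2)) = \<mu>" unfolding \<mu>_def q_def[abs_def] by simp
  have mu1: "1 \<le> \<mu>" using Qs_ge1[of 0] Qs_le[of 0] unfolding \<mu>_def by simp
  have Qlim: "(\<lambda>K. 1 / Qs K) \<longlonglongrightarrow> 1 / \<mu>"
    using mu1 unfolding \<mu>_def by (intro tendsto_divide tendsto_const Qs_lim) auto
  show ?thesis unfolding mu_eq LIMSEQ_iff real_norm_def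
  proof (intro allI impI)
    fix \<epsilon> :: real assume ep: "0 < \<epsilon>"
    obtain K where K: "\<bar>1 / Qs K - 1 / \<mu>\<bar> < \<epsilon> / 2"
      using Qlim ep unfolding LIMSEQ_iff real_norm_def by (metis half_gt_zero order_refl)
    define Q where "Q = Qs K"
    have Q1: "1 \<le> Q" unfolding Q_def by (rule Qs_ge1)
    define N where "N = nat \<lceil>2 * (real K + 2) / \<epsilon>\<rceil> + 2"
    show "\<exists>no. \<forall>n\<ge>no. \<bar>expected_max_weight n / (real n - 1) - 1 / \<mu>\<bar> < \<epsilon>"
    proof (intro exI allI impI)
      fix n assume nN: "N \<le> n"
      define d where "d = real n - 1"
      have "real N \<le> real n" using nN by simp
      moreover have "2 * (real K + 2) / \<epsilon> + 2 \<le> real N" unfolding N_def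
        using real_nat_ceiling_ge[of "2 * (real K + 2) / \<epsilon>"] by simp
      ultimately have dge: "2 * (real K + 2) / \<epsilon> + 1 \<le> d" unfolding d_def by simp
      have dpos: "0 < d" using dge ep by (smt (verit) divide_nonneg_pos of_nat_0_le_iff)
      have n1: "1 \<le> n" using dpos unfolding d_def by simp
      have e1: "(real K + 1) / d < \<epsilon> / 2"
      proof -
        have "2 * (real K + 2) / \<epsilon> < d" using dge by simp
        then have "2 * (real K + 2) < d * \<epsilon>" using ep by (simp add: divide_less_eq)
        then show ?thesis using dpos ep by (simp add: divide_less_eq field_simps)
      qed
      have e2: "1 / d < \<epsilon> / 2"
      proof -
        have "2 * (real K + 2) / \<epsilon> < d" using dge by simp
        then have "2 * (real K + 2) < d * \<epsilon>" using ep by (simp add: divide_less_eq)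
        then show ?thesis using dpos ep by (simp add: divide_less_eq field_simps)
      qed
      have emw: "expected_max_weight n = U n - 1"
        using emw_ex[OF n1] ex_u[OF n1] unfolding U_def by simp
      have lo: "real n / \<mu> \<le> U n" using U_lower[of n] mu1 unfolding \<mu>_def by (simp add: pos_divide_le_eq)
      have up: "U n \<le> real (n + K) / Q" using U_upper[of K n] Q1 unfolding Q_def by (simp add: pos_le_divide_eq mult.commute)
      have up2: "U n - 1 \<le> d * (1 / Q) + (real K + 1)"
      proof -
        have "real (n + K) / Q = d / Q + (real K + 1) / Q" unfolding d_def by (simp add: add_divide_distrib[symmetric])
        also have "(real K + 1) / Q \<le> real K + 1" using Q1 by (simp add: divide_le_eq mult_le_cancel_left1)
        finally show ?thesis using up by simp
      qed
      have lo2: "d * (1 / \<mu>) - 1 \<le> U n - 1"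
      proof -
        have "d * (1 / \<mu>) \<le> real n / \<mu>" unfolding d_def using mu1 by (simp add: divide_right_mono)
        then show ?thesis using lo by simp
      qed
      have a_up: "(U n - 1) / d \<le> 1 / Q + (real K + 1) / d"
        using divide_right_mono[OF up2, of d] dpos by (simp add: add_divide_distrib)
      have a_lo: "1 / \<mu> - 1 / d \<le> (U n - 1) / d"
        using divide_right_mono[OF lo2, of d] dpos by (simp add: diff_divide_distrib)
      have "\<bar>1 / Q - 1 / \<mu>\<bar> < \<epsilon> / 2" using K unfolding Q_def .
      then show "\<bar>expected_max_weight n / (real n - 1) - 1 / \<mu>\<bar> < \<epsilon>"
        unfolding emw d_def[symmetric] using a_up a_lo e1 e2 by linarith
    qed
  qed
qed

end
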